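(* Let $A=(a,\ ha+d,\ ha+3d,\ ha+5d,\ \dots,\ ha+(2k+1)d)$ where $\gcd(a,d)=1$, $a,h,d,k\in\mathbb{P}$, $a>2$, $d>h$, $1\le 2k+1\le a-1$. Write $a-1=(2k+1)s+t$ with $1\le t\le 2k+1$. Then \begin{align*} \sum_{r=0}^{a-1}x^{N_r}&=1+\frac{x^{ha+d}\big(1-x^{(ha+(2k+1)d)s}\big)\big(1-x^{2d(k+1)}\big)}{(1-x^{ha+(2k+1)d})(1-x^{2d})}+\frac{x^{2ha+2d}\big(1-x^{(ha+(2k+1)d)s}\big)\big(1-x^{2dk}\big)}{(1-x^{ha+(2k+1)d})(1-x^{2d})}+f_1(x), \end{align*} where $$f_1(x)=\begin{cases}\dfrac{x^{ha(s+1)+d((2k+1)s+1)}\big(1-x^{d(t+1)}\big)}{1-x^{2d}}+\dfrac{x^{ha(s+2)+d((2k+1)s+2)}\big(1-x^{d(t-1)}\big)}{1-x^{2d}} & \text{if } t \text{ is odd},\\[8pt] \dfrac{x^{ha(s+1)+d((2k+1)s+1)}\big(1-x^{dt}\big)}{1-x^{2d}}+\dfrac{x^{ha(s+2)+d((2k+1)s+2)}\big(1-x^{dt}\big)}{1-x^{2d}} & \text{if } t \text{ is even}.\end{cases}$$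
   Context: For $A=(a,c_1,\dots,c_m)$ of positive integers with $\gcd(A)=1$ and $0\le r\le a-1$, $N_r$ is the least nonnegative integer $a_0\equiv r\pmod a$ that can be written as $\sum_{i=1}^m c_ix_i$ with all $x_i$ nonnegative integers. $\mathbb{P}=\{1,2,\dots\}$. *)

theory Defs
  imports Complex_Main
begin

definition representable :: "nat list \<Rightarrow> nat \<Rightarrow> bool" where
  "representable C n \<longleftrightarrow> (\<exists>xs. length xs = length C \<and> n = (\<Sum>i<length C. C ! i * xs ! i))"

definition Nr :: "nat \<Rightarrow> nat list \<Rightarrow> nat \<Rightarrow> nat" where
  "Nr a C r = (LEAST n. n mod a = r \<and> representable C n)"

end

theory Submission
  imports Defs
begin

lemma rep_iff:
  "representable (map f [0..<n]) N \<longleftrightarrow> (\<exists>g. N = (\<Sum>i<n. f i * g i))"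
proof
  assume "representable (map f [0..<n]) N"
  then obtain xs where "length xs = n" "N = (\<Sum>i<n. map f [0..<n] ! i * xs ! i)"
    unfolding representable_def by auto
  then have "N = (\<Sum>i<n. f i * xs ! i)" by simp
  then show "\<exists>g. N = (\<Sum>i<n. f i * g i)" by blast
next
  assume "\<exists>g. N = (\<Sum>i<n. f i * g i)"
  then obtain g where g: "N = (\<Sum>i<n. f i * g i)" by blast
  show "representable (map f [0..<n]) N"
    unfolding representable_def
    by (rule exI[of _ "map g [0..<n]"]) (simp add: g)
qed

lemma sum_split_nat: "(\<Sum>m<p+(q::nat). g m) = (\<Sum>m<p. g m) + (\<Sum>w<q. (g (p+w)::'a::comm_monoid_add))"
  by (induction q) (simp_all add: add.assoc)

lemma sum_blocks: "(\<Sum>m<K*(s::nat). g m) = (\<Sum>j<s. \<Sum>w<K. (g (K*j+w)::'a::comm_monoid_add))"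
proof (induction s)
  case 0 then show ?case by simp
next
  case (Suc s)
  have "K * Suc s = K*s + K" by simp
  then show ?case using Suc by (simp only: sum_split_nat) simp
qed

lemma sum_odd_split: "(\<Sum>w<2*(p::nat)+1. g w) = (\<Sum>i<p+1. g (2*i)) + (\<Sum>i<p. (g (2*i+1)::'a::comm_monoid_add))"
  by (induction p) (simp_all add: algebra_simps)

lemma sum_even_split: "(\<Sum>w<2*(p::nat). g w) = (\<Sum>i<p. g (2*i)) + (\<Sum>i<p. (g (2*i+1)::'a::comm_monoid_add))"
  by (induction p) (simp_all add: algebra_simps)

definition nn :: "nat \<Rightarrow> nat \<Rightarrow> nat" where
  "nn K m = (if m = 0 then 0 else (m-1) div K + 1 + (m-1) mod K mod 2)"

lemma nn_block: "w < K \<Longrightarrow> nn K (Suc (K*j+w)) = j + 1 + w mod 2"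
  unfolding nn_def by simp

lemma nn_props:
  assumes "K = 2*k+1"
  shows "even (nn K m + m) \<and> nn K m \<le> m \<and> m \<le> K * nn K m"
proof (cases "m = 0")
  case True then show ?thesis by (simp add: nn_def)
next
  case False
  define q where "q = (m-1) div K"
  define w where "w = (m-1) mod K"
  have m: "m = K*q + w + 1" using False unfolding q_def w_def by simp
  have wK: "w < K" using assms unfolding w_def by simp
  have nn: "nn K m = q + 1 + w mod 2" using False unfolding nn_def q_def w_def by simp
  have "nn K m + m = 2*(q+1+k*q) + (w + w mod 2)" using nn m assms(1) by (simp add: algebra_simps)
  moreover have "even (w + w mod 2)" by (cases "even w") auto
  ultimately have e: "even (nn K m + m)" by simp
  have l: "nn K m \<le> m" using nn m assms
    by (cases "even w") (auto simp: odd_pos)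
  have u1: "K*q + w + 1 \<le> K * (q+1)" using wK by (simp add: algebra_simps)
  have "q+1 \<le> nn K m" using nn by simp
  then have "K*(q+1) \<le> K * nn K m" by (rule mult_le_mono2)
  then have "m \<le> K * nn K m" using m u1 by linarith
  then show ?thesis using e l by blast
qed

lemma nn_lower:
  assumes "K = 2*k+1" "m \<le> K*n" "even (n+m)"
  shows "nn K m \<le> n"
proof (cases "m = 0")
  case True then show ?thesis by (simp add: nn_def)
next
  case False
  define q where "q = (m-1) div K"
  define w where "w = (m-1) mod K"
  have m: "m = K*q + w + 1" using False unfolding q_def w_def by simp
  have wK: "w < K" using assms unfolding w_def by simp
  have nn: "nn K m = q + 1 + w mod 2" using False unfolding nn_def q_def w_def by simp
  have "K*q < K*n" using assms(2) m by linarith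
  then have qn: "q < n" using mult_less_cancel1 by blast
  show ?thesis
  proof (cases "even w")
    case True then show ?thesis using qn nn by simp
  next
    case odd: False
    have "n \<noteq> q+1"
    proof
      assume "n = q+1"
      then have "even (q+1 + (2*k+1)*q + w + 1)" using assms(3) m assms(1) by simp
      then have "even (2*(q+1+k*q) + w)" by (simp add: algebra_simps)
      then show False using odd by simp
    qed
    then show ?thesis using qn nn odd by simp
  qed
qed

lemma nn_upper:
  assumes "K = 2*k+1" "m0 \<le> K*n"
  shows "nn K m0 \<le> n + 1"
proof (cases "m0 = 0")
  case True then show ?thesis by (simp add: nn_def)
next
  case False
  define q where "q = (m0-1) div K"
  define w where "w = (m0-1) mod K"
  have m: "m0 = K*q + w + 1" using False unfolding q_def w_def by simp
  have nn: "nn K m0 = q + 1 + w mod 2" using False unfolding nn_def q_def w_def by simp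
  have "K*q < K*n" using assms(2) m by linarith
  then have qn: "q < n" using mult_less_cancel1 by blast
  then show ?thesis using nn by (cases "even w") auto
qed

definition RR :: "nat \<Rightarrow> nat \<Rightarrow> nat \<Rightarrow> nat \<Rightarrow> bool" where
  "RR c d k N \<longleftrightarrow> (\<exists>g. N = (\<Sum>i<k+1. (c + (2*i+1)*d) * g i))"

lemma RR_add: "RR c d k N \<Longrightarrow> RR c d k M \<Longrightarrow> RR c d k (N+M)"
proof -
  assume "RR c d k N" "RR c d k M"
  then obtain g1 g2 where "N = (\<Sum>i<k+1. (c + (2*i+1)*d) * g1 i)" "M = (\<Sum>i<k+1. (c + (2*i+1)*d) * g2 i)"
    unfolding RR_def by blast
  then have "N + M = (\<Sum>i<k+1. (c + (2*i+1)*d) * (g1 i + g2 i))"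
    by (simp add: sum.distrib distrib_left)
  then show ?thesis unfolding RR_def by (intro exI[of _ "\<lambda>i. g1 i + g2 i"])
qed

lemma RR_gen: "j < k+1 \<Longrightarrow> RR c d k (c + (2*j+1)*d)"
proof -
  assume j: "j < k+1"
  have "(\<Sum>i<k+1. (c + (2*i+1)*d) * (if i = j then 1 else 0)) = c + (2*j+1)*d"
    using j by (simp add: if_distrib cong: if_cong)
  then show ?thesis unfolding RR_def by metis
qed

lemma RR_zero: "RR c d k 0"
  unfolding RR_def by (rule exI[of _ "\<lambda>_. 0"]) simp

lemma RR_construct:
  "\<forall>m. even (n+m) \<and> n \<le> m \<and> m \<le> (2*k+1)*n \<longrightarrow> RR c d k (n*c + d*m)"
proof (induction n)
  case 0 then show ?case by (simp add: RR_zero)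
next
  case (Suc n)
  show ?case
  proof (intro allI impI)
    fix m assume hm: "even (Suc n + m) \<and> Suc n \<le> m \<and> m \<le> (2*k+1)*Suc n"
    obtain ov where ov: "odd ov" "1 \<le> ov" "ov \<le> 2*k+1" "n \<le> m - ov" "m - ov \<le> (2*k+1)*n" "ov \<le> m"
    proof (cases "m - 1 \<le> (2*k+1)*n")
      case True
      have "n \<le> m - 1" "1 \<le> m" using hm by auto
      then show ?thesis using that[of 1] True by auto
    next
      case False
      have "odd (m - (2*k+1)*n)" using hm False by auto
      moreover have "(2*k+1)*Suc n = (2*k+1)*n + (2*k+1)" by simp
      then have "m - (2*k+1)*n \<le> 2*k+1" using hm by linarith
      moreover have "n \<le> (2*k+1)*n" by simp
      ultimately show ?thesis using that[of "m - (2*k+1)*n"] False by auto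
    qed
    define j where "j = (ov - 1) div 2"
    have oj: "ov = 2*j+1" using ov(1) unfolding j_def by (simp add: odd_pos)
    have jk: "j < k+1" using ov(3) oj by simp
    have "even (n + (m - ov))" using hm ov by auto
    then have r1: "RR c d k (n*c + d*(m-ov))" using Suc.IH ov by blast
    have r2: "RR c d k (c + (2*j+1)*d)" using jk by (rule RR_gen)
    obtain r where mr: "m = ov + r" using ov(6) le_Suc_ex by blast
    have "Suc n * c + d*m = (n*c + d*(m-ov)) + (c + (2*j+1)*d)"
      unfolding mr oj by (simp add: algebra_simps)
    then show "RR c d k (Suc n * c + d*m)" using RR_add[OF r1 r2] by metis
  qed
qed

lemma RR_decomp:
  assumes "RR c d k N"
  shows "\<exists>n m. N = n*c + d*m \<and> m \<le> (2*k+1)*n \<and> even (n+m)"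
proof -
  obtain g where g: "N = (\<Sum>i<k+1. (c + (2*i+1)*d) * g i)" using assms unfolding RR_def by blast
  define n where "n = (\<Sum>i<k+1. g i)"
  define m where "m = (\<Sum>i<k+1. (2*i+1) * g i)"
  have "N = n*c + d*m" unfolding g n_def m_def
    by (simp add: sum.distrib sum_distrib_left sum_distrib_right algebra_simps)
  moreover have "m \<le> (2*k+1)*n" unfolding m_def n_def sum_distrib_left
    by (rule sum_mono) simp
  moreover have "n + m = 2 * (\<Sum>i<k+1. (i+1) * g i)" unfolding m_def n_def
    by (simp add: sum.distrib sum_distrib_left algebra_simps)
  ultimately show ?thesis by (metis dvd_triv_left)
qed

lemma rep_RR: "representable (map (\<lambda>i. c + (2*i+1)*d) [0..<k+1]) N \<longleftrightarrow> RR c d k N"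
  unfolding rep_iff RR_def by simp

lemma Nr_val:
  assumes K: "K = 2*k+1" and a: "a > 0" and cop: "gcd a d = 1" and hd: "h < d" and m0: "m0 < a"
  shows "Nr a (map (\<lambda>i. h*a + (2*i+1)*d) [0..<k+1]) (d*m0 mod a) = nn K m0 * (h*a) + d*m0"
  unfolding Nr_def rep_RR
proof (rule Least_equality)
  have "nn K m0 * (h*a) + d*m0 = d*m0 + (nn K m0 * h) * a" by (simp add: algebra_simps)
  then have "(nn K m0 * (h*a) + d*m0) mod a = d*m0 mod a" by (metis mod_mult_self1)
  moreover have "RR (h*a) d k (nn K m0 * (h*a) + d*m0)"
  proof -
    have p: "even (nn K m0 + m0) \<and> nn K m0 \<le> m0 \<and> m0 \<le> (2*k+1) * nn K m0"
      using nn_props[OF K, of m0] K by simp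
    show ?thesis using RR_construct[of "nn K m0" k "h*a" d] p by blast
  qed
  ultimately show "(nn K m0 * (h*a) + d*m0) mod a = d*m0 mod a \<and> RR (h*a) d k (nn K m0 * (h*a) + d*m0)"
    by blast
next
  fix N assume hN: "N mod a = d*m0 mod a \<and> RR (h*a) d k N"
  then obtain n m where nm: "N = n*(h*a) + d*m" "m \<le> (2*k+1)*n" "even (n+m)"
    using RR_decomp by blast
  have "N = d*m + (n*h)*a" using nm(1) by (simp add: algebra_simps)
  then have "d*m mod a = d*m0 mod a" using hN by (metis mod_mult_self1)
  then have "int d * int m mod int a = int d * int m0 mod int a" by (metis of_nat_mod of_nat_mult)
  moreover have "coprime (int a) (int d)" using cop by (simp add: coprime_iff_gcd_eq_1)
  ultimately have "int m mod int a = int m0 mod int a" using mult_mod_cancel_left by blast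
  then have "m mod a = m0 mod a" by (metis of_nat_eq_iff of_nat_mod)
  then have mm: "m mod a = m0" using m0 by simp
  show "nn K m0 * (h*a) + d*m0 \<le> N"
  proof (cases "m = m0")
    case True
    then have "nn K m0 \<le> n" using nn_lower[OF K, of m0 n] nm K by simp
    then have "nn K m0 * (h*a) \<le> n * (h*a)" by (rule mult_le_mono1)
    then show ?thesis using nm(1) True by simp
  next
    case False
    have md: "m = a * (m div a) + m0" using mm by (metis mult_div_mod_eq)
    have "m div a \<noteq> 0"
    proof
      assume "m div a = 0"
      then have "m < a" using a by (simp add: div_eq_0_iff)
      then show False using mm False by simp
    qed
    then have "a \<le> a * (m div a)" by simp
    then have "m0 + a \<le> m" using md by linarith
    then have "d*(m0 + a) \<le> d*m" by simp
    moreover have "m0 \<le> K*n" using \<open>m0 + a \<le> m\<close> nm(2) K by simp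
    then have "nn K m0 \<le> n+1" using nn_upper[OF K] by blast
    then have "nn K m0 * (h*a) \<le> (n+1)*(h*a)" by (rule mult_le_mono1)
    moreover have "h*a \<le> d*a" using hd by (intro mult_le_mono1) simp
    moreover have "(n+1)*(h*a) = n*(h*a) + h*a" by simp
    moreover have "d*(m0 + a) = d*m0 + d*a" by (simp add: distrib_left)
    moreover have "d*a = a*d" by simp
    ultimately show ?thesis using nm(1) by linarith
  qed
qed

lemma cancel_nat: "gcd a d = 1 \<Longrightarrow> d*m mod a = d*m' mod (a::nat) \<Longrightarrow> m mod a = m' mod a"
proof -
  assume cop: "gcd a d = 1" and h: "d*m mod a = d*m' mod a"
  then have "int d * int m mod int a = int d * int m' mod int a" by (metis of_nat_mod of_nat_mult)
  moreover have "coprime (int a) (int d)" using cop by (simp add: coprime_iff_gcd_eq_1)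
  ultimately have "int m mod int a = int m' mod int a" using mult_mod_cancel_left by blast
  then show "m mod a = m' mod a" by (metis of_nat_eq_iff of_nat_mod)
qed

lemma bij_mult: "gcd a d = 1 \<Longrightarrow> bij_betw (\<lambda>m. d*m mod a) {..<a} {..<(a::nat)}"
proof -
  assume cop: "gcd a d = 1"
  have inj: "inj_on (\<lambda>m. d*m mod a) {..<a}"
  proof (rule inj_onI)
    fix m m' assume mm: "m \<in> {..<a}" "m' \<in> {..<a}" "d*m mod a = d*m' mod a"
    have "m mod a = m' mod a" using cancel_nat[OF cop mm(3)] .
    then show "m = m'" using mm(1,2) by simp
  qed
  have "(\<lambda>m. d*m mod a) ` {..<a} \<subseteq> {..<a}" by auto
  moreover have "card ((\<lambda>m. d*m mod a) ` {..<a}) = card {..<a}" using card_image[OF inj] by simp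
  ultimately have "(\<lambda>m. d*m mod a) ` {..<a} = {..<a}" using card_subset_eq by blast
  then show ?thesis using inj unfolding bij_betw_def by blast
qed

lemma pow_split: "e = A + L*j + (2*d)*i \<Longrightarrow> (x::complex)^e = x^A * (x^L)^j * (x^(2*d))^i"
  by (simp only: power_add power_mult)

lemma pow_split2: "e = A + (2*d)*i \<Longrightarrow> (x::complex)^e = x^A * (x^(2*d))^i"
  by (simp only: power_add power_mult)

theorem mainTheorem15:
  fixes a h d k s t :: nat and x :: complex
  assumes "a > 0" "h > 0" "d > 0" "k > 0" "a > 2" "d > h" "gcd a d = 1"
    and "1 \<le> 2*k+1" "2*k+1 \<le> a - 1"
    and "a - 1 = (2*k+1)*s + t" "1 \<le> t" "t \<le> 2*k+1"
    and "1 - x^(2*d) \<noteq> 0" "1 - x^(h*a+(2*k+1)*d) \<noteq> 0"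
  shows "(\<Sum>r=0..a-1. x ^ Nr a (map (\<lambda>i. h*a + (2*i+1)*d) [0..<k+1]) r)
     = 1 + x^(h*a+d) * (1 - x^((h*a+(2*k+1)*d)*s)) * (1 - x^(2*d*(k+1)))
             / ((1 - x^(h*a+(2*k+1)*d)) * (1 - x^(2*d)))
         + x^(2*h*a+2*d) * (1 - x^((h*a+(2*k+1)*d)*s)) * (1 - x^(2*d*k))
             / ((1 - x^(h*a+(2*k+1)*d)) * (1 - x^(2*d)))
         + (if odd t then
              x^(h*a*(s+1) + d*((2*k+1)*s+1)) * (1 - x^(d*(t+1))) / (1 - x^(2*d))
            + x^(h*a*(s+2) + d*((2*k+1)*s+2)) * (1 - x^(d*(t-1))) / (1 - x^(2*d))
            else
              x^(h*a*(s+1) + d*((2*k+1)*s+1)) * (1 - x^(d*t)) / (1 - x^(2*d))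
            + x^(h*a*(s+2) + d*((2*k+1)*s+2)) * (1 - x^(d*t)) / (1 - x^(2*d)))"
proof -
  define K where "K = 2*k+1"
  define L where "L = h*a+(2*k+1)*d"
  define y where "y = x^L"
  define z where "z = x^(2*d)"
  define C where "C = map (\<lambda>i. h*a + (2*i+1)*d) [0..<k+1]"
  define F where "F m = x^(nn K m * (h*a) + d*m)" for m
  have y1: "1 - y \<noteq> 0" using assms(14) unfolding y_def L_def .
  have z1: "1 - z \<noteq> 0" using assms(13) unfolding z_def .
  have gy: "(\<Sum>j<n. y^j) = (1 - y^n) / (1 - y)" for n using y1 by (simp add: sum_gp_strict)
  have gz: "(\<Sum>j<n. z^j) = (1 - z^n) / (1 - z)" for n using z1 by (simp add: sum_gp_strict)
  have aeq: "a = Suc (K*s + t)" using assms(1,10) unfolding K_def by simp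
  have S1: "(\<Sum>r=0..a-1. x ^ Nr a C r) = (\<Sum>m<a. F m)"
  proof -
    have "{0..a-1} = {..<a}" using assms(1) by auto
    then have "(\<Sum>r=0..a-1. x ^ Nr a C r) = (\<Sum>r<a. x ^ Nr a C r)" by simp
    also have "\<dots> = (\<Sum>m<a. x ^ Nr a C (d*m mod a))"
      using sum.reindex_bij_betw[OF bij_mult[OF assms(7)], of "\<lambda>r. x ^ Nr a C r"] by simp
    also have "\<dots> = (\<Sum>m<a. F m)"
    proof (rule sum.cong)
      fix m assume "m \<in> {..<a}"
      then show "x ^ Nr a C (d*m mod a) = F m"
        unfolding F_def C_def using Nr_val[OF K_def assms(1) assms(7) assms(6)] by simp
    qed simp
    finally show ?thesis .
  qed
  have S2: "(\<Sum>m<a. F m) = 1 + (\<Sum>j<s. \<Sum>w<K. F (Suc (K*j+w))) + (\<Sum>w<t. F (Suc (K*s+w)))"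
  proof -
    have "(\<Sum>m<a. F m) = F 0 + (\<Sum>m<K*s+t. F (Suc m))" unfolding aeq by (rule sum.lessThan_Suc_shift)
    also have "F 0 = 1" unfolding F_def nn_def by simp
    also have "(\<Sum>m<K*s+t. F (Suc m)) = (\<Sum>m<K*s. F (Suc m)) + (\<Sum>w<t. F (Suc (K*s+w)))"
      by (rule sum_split_nat)
    also have "(\<Sum>m<K*s. F (Suc m)) = (\<Sum>j<s. \<Sum>w<K. F (Suc (K*j+w)))"
      by (rule sum_blocks)
    finally show ?thesis by (simp add: add.assoc)
  qed
  have S3: "(\<Sum>w<K. F (Suc (K*j+w))) = x^(h*a+d) * y^j * (\<Sum>i<k+1. z^i) + x^(2*h*a+2*d) * y^j * (\<Sum>i<k. z^i)" for j
  proof -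
    have "(\<Sum>w<K. F (Suc (K*j+w))) = (\<Sum>i<k+1. F (Suc (K*j+2*i))) + (\<Sum>i<k. F (Suc (K*j+(2*i+1))))"
      unfolding K_def by (rule sum_odd_split)
    also have "(\<Sum>i<k+1. F (Suc (K*j+2*i))) = (\<Sum>i<k+1. x^(h*a+d) * y^j * z^i)"
    proof (rule sum.cong)
      fix i assume "i \<in> {..<k+1}"
      then have "2*i < K" unfolding K_def by simp
      then have "nn K (Suc (K*j+2*i)) = j + 1" using nn_block by simp
      then show "F (Suc (K*j+2*i)) = x^(h*a+d) * y^j * z^i"
        unfolding F_def y_def z_def by (rule_tac pow_split) (simp add: K_def L_def algebra_simps)
    qed simp
    also have "(\<Sum>i<k. F (Suc (K*j+(2*i+1)))) = (\<Sum>i<k. x^(2*h*a+2*d) * y^j * z^i)"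
    proof (rule sum.cong)
      fix i assume "i \<in> {..<k}"
      then have "2*i+1 < K" unfolding K_def by simp
      then have "nn K (Suc (K*j+(2*i+1))) = j + 2" using nn_block[of "2*i+1" K j] by simp
      then show "F (Suc (K*j+(2*i+1))) = x^(2*h*a+2*d) * y^j * z^i"
        unfolding F_def y_def z_def by (rule_tac pow_split) (simp add: K_def L_def algebra_simps)
    qed simp
    finally show ?thesis by (simp only: sum_distrib_left)
  qed
  have S3': "(\<Sum>j<s. \<Sum>w<K. F (Suc (K*j+w))) =
      x^(h*a+d) * (\<Sum>j<s. y^j) * (\<Sum>i<k+1. z^i) + x^(2*h*a+2*d) * (\<Sum>j<s. y^j) * (\<Sum>i<k. z^i)"
  proof -
    have gen: "(\<Sum>j<s. A*y^j*P) = A*(\<Sum>j<s. y^j)*P" for A P :: complex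
      by (simp only: sum_distrib_left sum_distrib_right)
    show ?thesis unfolding S3 sum.distrib gen ..
  qed
  define E1 where "E1 = h*a*(s+1) + d*((2*k+1)*s+1)"
  define E2 where "E2 = h*a*(s+2) + d*((2*k+1)*s+2)"
  have T1: "F (Suc (K*s+2*i)) = x^E1 * z^i" if "2*i < t" for i
  proof -
    have "2*i < K" using that assms(12) unfolding K_def by simp
    then have "nn K (Suc (K*s+2*i)) = s + 1" using nn_block by simp
    then show ?thesis
      unfolding F_def z_def by (rule_tac pow_split2) (simp add: K_def E1_def algebra_simps)
  qed
  have T2: "F (Suc (K*s+(2*i+1))) = x^E2 * z^i" if "2*i+1 < t" for i
  proof -
    have "2*i+1 < K" using that assms(12) unfolding K_def by simp
    then have "nn K (Suc (K*s+(2*i+1))) = s + 2" using nn_block[of "2*i+1" K s] by simp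
    then show ?thesis
      unfolding F_def z_def by (rule_tac pow_split2) (simp add: K_def E2_def algebra_simps)
  qed
  define p where "p = t div 2"
  have tail: "(\<Sum>w<t. F (Suc (K*s+w))) =
     (if odd t then x^E1 * (\<Sum>i<p+1. z^i) + x^E2 * (\<Sum>i<p. z^i)
      else x^E1 * (\<Sum>i<p. z^i) + x^E2 * (\<Sum>i<p. z^i))"
  proof (cases "odd t")
    case True
    then have tp: "t = 2*p+1" unfolding p_def by simp
    have "(\<Sum>w<t. F (Suc (K*s+w))) = (\<Sum>i<p+1. F (Suc (K*s+2*i))) + (\<Sum>i<p. F (Suc (K*s+(2*i+1))))"
      unfolding tp by (rule sum_odd_split)
    also have "(\<Sum>i<p+1. F (Suc (K*s+2*i))) = (\<Sum>i<p+1. x^E1 * z^i)"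
      by (rule sum.cong) (simp_all add: T1 tp)
    also have "(\<Sum>i<p. F (Suc (K*s+(2*i+1)))) = (\<Sum>i<p. x^E2 * z^i)"
    proof (rule sum.cong)
      fix i assume "i \<in> {..<p}"
      then have "2*i+1 < t" using tp by simp
      then show "F (Suc (K*s+(2*i+1))) = x^E2 * z^i" by (rule T2)
    qed simp
    finally show ?thesis using True by (simp only: sum_distrib_left if_True not_False_eq_True)
  next
    case False
    then have tp: "t = 2*p" unfolding p_def by simp
    have "(\<Sum>w<t. F (Suc (K*s+w))) = (\<Sum>i<p. F (Suc (K*s+2*i))) + (\<Sum>i<p. F (Suc (K*s+(2*i+1))))"
      unfolding tp by (rule sum_even_split)
    also have "(\<Sum>i<p. F (Suc (K*s+2*i))) = (\<Sum>i<p. x^E1 * z^i)"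
      by (rule sum.cong) (simp_all add: T1 tp)
    also have "(\<Sum>i<p. F (Suc (K*s+(2*i+1)))) = (\<Sum>i<p. x^E2 * z^i)"
    proof (rule sum.cong)
      fix i assume "i \<in> {..<p}"
      then have "2*i+1 < t" using tp by simp
      then show "F (Suc (K*s+(2*i+1))) = x^E2 * z^i" by (rule T2)
    qed simp
    finally show ?thesis using False by (simp only: sum_distrib_left if_False not_True_eq_False)
  qed
  have py: "x^((h*a+(2*k+1)*d)*s) = y^s" by (simp add: y_def L_def power_mult)
  have pz: "x^(2*d*n) = z^n" for n by (simp add: z_def power_mult)
  have pL: "x^(h*a+(2*k+1)*d) = y" "x^(2*d) = z" by (simp_all add: y_def L_def z_def)
  have R1: "x^(h*a+d) * (1 - x^((h*a+(2*k+1)*d)*s)) * (1 - x^(2*d*(k+1)))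
             / ((1 - x^(h*a+(2*k+1)*d)) * (1 - x^(2*d))) = x^(h*a+d) * (\<Sum>j<s. y^j) * (\<Sum>i<k+1. z^i)"
    unfolding gy gz py pz pL using y1 z1 by (simp add: field_simps)
  have R2: "x^(2*h*a+2*d) * (1 - x^((h*a+(2*k+1)*d)*s)) * (1 - x^(2*d*k))
             / ((1 - x^(h*a+(2*k+1)*d)) * (1 - x^(2*d))) = x^(2*h*a+2*d) * (\<Sum>j<s. y^j) * (\<Sum>i<k. z^i)"
    unfolding gy gz py pz pL using y1 z1 by (simp add: field_simps)
  have R3: "(if odd t then
              x^(h*a*(s+1) + d*((2*k+1)*s+1)) * (1 - x^(d*(t+1))) / (1 - x^(2*d))
            + x^(h*a*(s+2) + d*((2*k+1)*s+2)) * (1 - x^(d*(t-1))) / (1 - x^(2*d))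
            else
              x^(h*a*(s+1) + d*((2*k+1)*s+1)) * (1 - x^(d*t)) / (1 - x^(2*d))
            + x^(h*a*(s+2) + d*((2*k+1)*s+2)) * (1 - x^(d*t)) / (1 - x^(2*d)))
       = (if odd t then x^E1 * (\<Sum>i<p+1. z^i) + x^E2 * (\<Sum>i<p. z^i)
      else x^E1 * (\<Sum>i<p. z^i) + x^E2 * (\<Sum>i<p. z^i))"
  proof (cases "odd t")
    case True
    then have tp: "t = 2*p+1" unfolding p_def by simp
    have e1: "d*(t+1) = 2*d*(p+1)" "d*(t-1) = 2*d*p" unfolding tp by (simp_all add: algebra_simps)
    show ?thesis using True z1 unfolding gz E1_def E2_def e1 pz pL by (simp add: field_simps)
  next
    case False
    then have tp: "t = 2*p" unfolding p_def by simp
    have e1: "d*t = 2*d*p" unfolding tp by (simp_all add: algebra_simps)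
    show ?thesis using False z1 unfolding gz E1_def E2_def e1 pz pL by (simp add: field_simps)
  qed
  have "(\<Sum>r=0..a-1. x ^ Nr a (map (\<lambda>i. h*a + (2*i+1)*d) [0..<k+1]) r) = (\<Sum>m<a. F m)"
    using S1 unfolding C_def .
  also have "\<dots> = 1 + (x^(h*a+d) * (\<Sum>j<s. y^j) * (\<Sum>i<k+1. z^i) + x^(2*h*a+2*d) * (\<Sum>j<s. y^j) * (\<Sum>i<k. z^i))
     + (if odd t then x^E1 * (\<Sum>i<p+1. z^i) + x^E2 * (\<Sum>i<p. z^i)
      else x^E1 * (\<Sum>i<p. z^i) + x^E2 * (\<Sum>i<p. z^i))"
    unfolding S2 S3' tail ..
  finally show ?thesis unfolding R1 R2 R3 by (simp add: add.assoc)
qed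

end
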